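(* Let $G$ be a group and let $H_1, H_2, \ldots, H_n$ be the successive vertices of a path $\gamma$ in $\mathcal{C}(G)$. If $H_i \subseteq H_{i+1}$ for all $i$, then $\gamma$ is a geodesic.
   Context: For subgroups $A,B$ of $G$, $c(A,B) = [A:A\cap B][B:A\cap B]$. The commensurability graph $\mathcal{C}(G)$ is the weighted graph whose vertices are all subgroups of $G$, with an edge between $A$ and $B$ if and only if $A\cap B$ has finite index in both $A$ and $B$, this edge having weight $c(A,B)$. The length of a path is the product of its edge weights; the distance between two vertices is the minimal length of a path joining them, and a geodesic is a path whose length equals the distance between its endpoints. *)

theory Defs
  imports "HOL-Algebra.Coset"
begin

definition fin_index :: "('a, 'b) monoid_scheme \<Rightarrow> 'a set \<Rightarrow> 'a set \<Rightarrow> bool" where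
  "fin_index G H A \<longleftrightarrow> finite {H #>\<^bsub>G\<^esub> a | a. a \<in> A}"

definition rindex :: "('a, 'b) monoid_scheme \<Rightarrow> 'a set \<Rightarrow> 'a set \<Rightarrow> nat" where
  "rindex G H A = card {H #>\<^bsub>G\<^esub> a | a. a \<in> A}"

definition commens :: "('a, 'b) monoid_scheme \<Rightarrow> 'a set \<Rightarrow> 'a set \<Rightarrow> bool" where
  "commens G A B \<longleftrightarrow> subgroup A G \<and> subgroup B G
     \<and> fin_index G (A \<inter> B) A \<and> fin_index G (A \<inter> B) B"

definition cweight :: "('a, 'b) monoid_scheme \<Rightarrow> 'a set \<Rightarrow> 'a set \<Rightarrow> nat" where
  "cweight G A B = rindex G (A \<inter> B) A * rindex G (A \<inter> B) B"

definition cpath :: "('a, 'b) monoid_scheme \<Rightarrow> 'a set list \<Rightarrow> bool" where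
  "cpath G p \<longleftrightarrow> p \<noteq> [] \<and> (\<forall>H\<in>set p. subgroup H G)
     \<and> (\<forall>i. Suc i < length p \<longrightarrow> commens G (p ! i) (p ! Suc i))"

definition plength :: "('a, 'b) monoid_scheme \<Rightarrow> 'a set list \<Rightarrow> nat" where
  "plength G p = (\<Prod>i<length p - 1. cweight G (p ! i) (p ! Suc i))"

definition cdist :: "('a, 'b) monoid_scheme \<Rightarrow> 'a set \<Rightarrow> 'a set \<Rightarrow> nat" where
  "cdist G A B = (LEAST l. \<exists>p. cpath G p \<and> hd p = A \<and> last p = B \<and> plength G p = l)"

definition geodesic :: "('a, 'b) monoid_scheme \<Rightarrow> 'a set list \<Rightarrow> bool" where
  "geodesic G p \<longleftrightarrow> cpath G p \<and> plength G p = cdist G (hd p) (last p)"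

end

theory Submission imports Defs begin

context group begin

lemma rcos_eq_iff:
  assumes "subgroup H G" "a \<in> carrier G" "b \<in> carrier G"
  shows "H #> a = H #> b \<longleftrightarrow> a \<otimes> inv b \<in> H"
proof
  assume "H #> a = H #> b"
  then have "a \<in> H #> b" using rcos_self[OF assms(2,1)] by simp
  then show "a \<otimes> inv b \<in> H" using subgroup.rcos_module_imp[OF assms(1) is_group assms(3)] by blast
next
  assume "a \<otimes> inv b \<in> H"
  then have "a \<in> H #> b" using subgroup.rcos_module_rev[OF assms(1) is_group assms(3,2)] by blast
  then show "H #> a = H #> b" using repr_independence[OF _ assms(3,1)] by simp
qed

lemma sub_mult_eq:
  assumes "subgroup K G" "subgroup V G" "K \<subseteq> V"
  shows "V <#> K = V"
proof
  show "V <#> K \<subseteq> V" unfolding set_mult_def using assms subgroup.m_closed[OF assms(2)] by blast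
  show "V \<subseteq> V <#> K"
  proof
    fix x assume x: "x \<in> V"
    have "x = x \<otimes> \<one>" using x subgroup.mem_carrier[OF assms(2)] by simp
    then show "x \<in> V <#> K" unfolding set_mult_def using x subgroup.one_closed[OF assms(1)] by blast
  qed
qed

lemma coset_lift:
  assumes "subgroup K G" "subgroup V G" "K \<subseteq> V" "x \<in> carrier G"
  shows "V <#> (K #> x) = V #> x"
  using setmult_rcos_assoc[of V K x] sub_mult_eq[OF assms(1-3)] assms
    subgroup.subset by metis

lemma cos_surj:
  assumes "subgroup K G" "subgroup V G" "K \<subseteq> V" "A \<subseteq> carrier G"
  shows "{V #> a | a. a \<in> A} = (\<lambda>S. V <#> S) ` {K #> a | a. a \<in> A}"
  using coset_lift[OF assms(1-3)] assms(4) by auto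

lemma cos_surj_card:
  assumes "subgroup K G" "subgroup V G" "K \<subseteq> V" "A \<subseteq> carrier G"
    and "finite {K #> a | a. a \<in> A}"
  shows "finite {V #> a | a. a \<in> A} \<and> card {V #> a | a. a \<in> A} \<le> card {K #> a | a. a \<in> A}"
  using cos_surj[OF assms(1-4)] assms(5) card_image_le by auto

lemma cos_inj_card:
  assumes "subgroup U G" "subgroup V G" "U \<subseteq> W" "W \<subseteq> carrier G"
    and "finite {V #> a | a. a \<in> W}"
  shows "finite {(U \<inter> V) #> a | a. a \<in> U} \<and> card {(U \<inter> V) #> a | a. a \<in> U} \<le> card {V #> a | a. a \<in> W}"
proof -
  have UV: "subgroup (U \<inter> V) G" using assms(1,2) by (rule subgroups_Inter_pair)
  have img: "(\<lambda>S. V <#> S) ` {(U \<inter> V) #> a | a. a \<in> U} \<subseteq> {V #> a | a. a \<in> W}"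
    using coset_lift[OF UV assms(2)] assms(3,4) subgroup.subset[OF assms(1)] by auto
  have inj: "inj_on (\<lambda>S. V <#> S) {(U \<inter> V) #> a | a. a \<in> U}"
  proof (rule inj_onI, clarify)
    fix a b assume a: "a \<in> U" and b: "b \<in> U" and eq: "V <#> ((U \<inter> V) #> a) = V <#> ((U \<inter> V) #> b)"
    have ac: "a \<in> carrier G" "b \<in> carrier G" using a b subgroup.subset[OF assms(1)] by auto
    have "V #> a = V #> b" using eq coset_lift[OF UV assms(2)] ac by auto
    then have "a \<otimes> inv b \<in> V" using rcos_eq_iff[OF assms(2) ac] by simp
    moreover have "a \<otimes> inv b \<in> U" using a b subgroup.m_closed[OF assms(1)] subgroup.m_inv_closed[OF assms(1)] by blast
    ultimately show "(U \<inter> V) #> a = (U \<inter> V) #> b" using rcos_eq_iff[OF UV ac] by simp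
  qed
  show ?thesis using card_inj_on_le[OF inj img assms(5)] finite_imageD[OF finite_subset[OF img assms(5)] inj] by simp
qed

lemma cos_tower:
  assumes "subgroup H G" "subgroup K G" "subgroup M G" "H \<subseteq> K" "K \<subseteq> M"
    and fKM: "finite {K #> a | a. a \<in> M}" and fHK: "finite {H #> a | a. a \<in> K}"
  shows "finite {H #> a | a. a \<in> M} \<and>
    card {H #> a | a. a \<in> M} = card {K #> a | a. a \<in> M} * card {H #> a | a. a \<in> K}"
proof -
  let ?CM = "{H #> a | a. a \<in> M}" and ?KM = "{K #> a | a. a \<in> M}" and ?HK = "{H #> a | a. a \<in> K}"
  define fib where "fib B = {S \<in> ?CM. K <#> S = B}" for B
  have Mc: "M \<subseteq> carrier G" using subgroup.subset[OF assms(3)] .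
  have fibeq: "fib (K #> b) = (\<lambda>T. T #> b) ` ?HK" if b: "b \<in> M" for b
  proof
    have bc: "b \<in> carrier G" using b Mc by auto
    show "fib (K #> b) \<subseteq> (\<lambda>T. T #> b) ` ?HK"
    proof
      fix S assume "S \<in> fib (K #> b)"
      then obtain a where a: "a \<in> M" "S = H #> a" and eq: "K <#> (H #> a) = K #> b" unfolding fib_def by auto
      have ac: "a \<in> carrier G" using a Mc by auto
      have "K #> a = K #> b" using eq coset_lift[OF assms(1,2,4) ac] by simp
      then have k: "a \<otimes> inv b \<in> K" using rcos_eq_iff[OF assms(2) ac bc] by simp
      have "(H #> (a \<otimes> inv b)) #> b = H #> a"
        using coset_mult_assoc[of H "a \<otimes> inv b" b] subgroup.subset[OF assms(1)] ac bc
        by (simp add: m_assoc)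
      then show "S \<in> (\<lambda>T. T #> b) ` ?HK" using k a by blast
    qed
    show "(\<lambda>T. T #> b) ` ?HK \<subseteq> fib (K #> b)"
    proof
      fix S assume "S \<in> (\<lambda>T. T #> b) ` ?HK"
      then obtain k where k: "k \<in> K" "S = (H #> k) #> b" by auto
      have kc: "k \<in> carrier G" using k subgroup.subset[OF assms(2)] by auto
      have S: "S = H #> (k \<otimes> b)" using k coset_mult_assoc[of H k b] subgroup.subset[OF assms(1)] kc bc by simp
      have kbM: "k \<otimes> b \<in> M" using k b assms(5) subgroup.m_closed[OF assms(3)] by blast
      have "K <#> S = K #> (k \<otimes> b)" using S coset_lift[OF assms(1,2,4)] kc bc by simp
      also have "\<dots> = K #> b" using rcos_eq_iff[OF assms(2)] kc bc k(1) by (simp add: m_assoc)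
      finally show "S \<in> fib (K #> b)" unfolding fib_def using S kbM by blast
    qed
  qed
  have injb: "inj_on (\<lambda>T. T #> b) ?HK" if b: "b \<in> M" for b
  proof (rule inj_onI)
    fix S T assume S: "S \<in> ?HK" and T: "T \<in> ?HK" and eq: "S #> b = T #> b"
    have bc: "b \<in> carrier G" using b Mc by auto
    have Ssub: "S \<subseteq> carrier G" "T \<subseteq> carrier G"
      using S T r_coset_subset_G subgroup.subset[OF assms(1)] subgroup.subset[OF assms(2)] by blast+
    have "S #> b #> inv b = T #> b #> inv b" using eq by simp
    then show "S = T" using coset_mult_assoc Ssub bc by simp
  qed
  have cardfib: "card (fib B) = card ?HK" if B: "B \<in> ?KM" for B
  proof -
    obtain b where b: "b \<in> M" "B = K #> b" using B by auto
    show ?thesis using fibeq[OF b(1)] card_image[OF injb[OF b(1)]] b(2) by simp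
  qed
  have finfib: "finite (fib B)" if B: "B \<in> ?KM" for B
    using B fibeq fHK by auto
  have union: "?CM = (\<Union>B\<in>?KM. fib B)"
  proof
    show "?CM \<subseteq> (\<Union>B\<in>?KM. fib B)"
    proof
      fix S assume S: "S \<in> ?CM"
      then obtain a where a: "a \<in> M" "S = H #> a" by auto
      have "K <#> S = K #> a" using a coset_lift[OF assms(1,2,4)] Mc by auto
      then show "S \<in> (\<Union>B\<in>?KM. fib B)" using S a unfolding fib_def by blast
    qed
    show "(\<Union>B\<in>?KM. fib B) \<subseteq> ?CM" unfolding fib_def by blast
  qed
  have fin: "finite ?CM" using union finfib fKM by simp
  have "card ?CM = (\<Sum>B\<in>?KM. card (fib B))"
    unfolding union by (rule card_UN_disjoint) (use fKM finfib in \<open>auto simp: fib_def\<close>)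
  also have "\<dots> = card ?KM * card ?HK" using cardfib by simp
  finally show ?thesis using fin by simp
qed

lemma tri1:
  assumes A: "subgroup A G" and B: "subgroup B G" and C: "subgroup C G"
    and f1: "finite {(A \<inter> B) #> a | a. a \<in> A}" and f2: "finite {(B \<inter> C) #> a | a. a \<in> B}"
  shows "finite {(A \<inter> C) #> a | a. a \<in> A} \<and>
    card {(A \<inter> C) #> a | a. a \<in> A} \<le> card {(A \<inter> B) #> a | a. a \<in> A} * card {(B \<inter> C) #> a | a. a \<in> B}"
proof -
  have AB: "subgroup (A \<inter> B) G" using A B by (rule subgroups_Inter_pair)
  have BC: "subgroup (B \<inter> C) G" using B C by (rule subgroups_Inter_pair)
  have AC: "subgroup (A \<inter> C) G" using A C by (rule subgroups_Inter_pair)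
  have H: "subgroup ((A \<inter> B) \<inter> (B \<inter> C)) G" using AB BC by (rule subgroups_Inter_pair)
  have i1: "finite {((A \<inter> B) \<inter> (B \<inter> C)) #> a | a. a \<in> A \<inter> B} \<and>
     card {((A \<inter> B) \<inter> (B \<inter> C)) #> a | a. a \<in> A \<inter> B} \<le> card {(B \<inter> C) #> a | a. a \<in> B}"
    using cos_inj_card[OF AB BC _ _ f2] subgroup.subset[OF B] by blast
  have i2: "finite {((A \<inter> B) \<inter> (B \<inter> C)) #> a | a. a \<in> A} \<and>
     card {((A \<inter> B) \<inter> (B \<inter> C)) #> a | a. a \<in> A} = card {(A \<inter> B) #> a | a. a \<in> A} * card {((A \<inter> B) \<inter> (B \<inter> C)) #> a | a. a \<in> A \<inter> B}"
    using cos_tower[OF H AB A _ _ f1] i1 by blast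
  have i3: "finite {(A \<inter> C) #> a | a. a \<in> A} \<and> card {(A \<inter> C) #> a | a. a \<in> A} \<le> card {((A \<inter> B) \<inter> (B \<inter> C)) #> a | a. a \<in> A}"
    using cos_surj_card[OF H AC _ _] i2 subgroup.subset[OF A] by blast
  show ?thesis using i1 i2 i3 by (metis (no_types, lifting) le_trans mult_le_mono2)
qed

lemma cos_self: "subgroup A G \<Longrightarrow> {A #> a | a. a \<in> A} = {A}"
  using subgroup.rcos_const[OF _ is_group] subgroup.one_closed by blast

end

lemma triangle:
  assumes "group G" "commens G A B" "commens G B C"
  shows "commens G A C \<and> cweight G A C \<le> cweight G A B * cweight G B C"
proof -
  interpret group G by fact
  have s: "subgroup A G" "subgroup B G" "subgroup C G" using assms(2,3) unfolding commens_def by auto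
  have f: "finite {(A \<inter> B) #>\<^bsub>G\<^esub> a | a. a \<in> A}" "finite {(A \<inter> B) #>\<^bsub>G\<^esub> a | a. a \<in> B}"
    "finite {(B \<inter> C) #>\<^bsub>G\<^esub> a | a. a \<in> B}" "finite {(B \<inter> C) #>\<^bsub>G\<^esub> a | a. a \<in> C}"
    using assms(2,3) unfolding commens_def fin_index_def by auto
  have t1: "finite {(A \<inter> C) #>\<^bsub>G\<^esub> a | a. a \<in> A} \<and>
    card {(A \<inter> C) #>\<^bsub>G\<^esub> a | a. a \<in> A} \<le> card {(A \<inter> B) #>\<^bsub>G\<^esub> a | a. a \<in> A} * card {(B \<inter> C) #>\<^bsub>G\<^esub> a | a. a \<in> B}"
    using tri1[OF s f(1) f(3)] .
  have t2: "finite {(A \<inter> C) #>\<^bsub>G\<^esub> a | a. a \<in> C} \<and>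
    card {(A \<inter> C) #>\<^bsub>G\<^esub> a | a. a \<in> C} \<le> card {(B \<inter> C) #>\<^bsub>G\<^esub> a | a. a \<in> C} * card {(A \<inter> B) #>\<^bsub>G\<^esub> a | a. a \<in> B}"
    using tri1[OF s(3) s(2) s(1)] f(4) f(2) by (simp add: Int_commute)
  have sAC: "subgroup (A \<inter> C) G" using s by (simp add: subgroups_Inter_pair)
  show ?thesis unfolding commens_def fin_index_def cweight_def rindex_def
  proof (intro conjI)
    show "card {(A \<inter> C) #>\<^bsub>G\<^esub> a | a. a \<in> A} * card {(A \<inter> C) #>\<^bsub>G\<^esub> a | a. a \<in> C}
      \<le> card {(A \<inter> B) #>\<^bsub>G\<^esub> a | a. a \<in> A} * card {(A \<inter> B) #>\<^bsub>G\<^esub> a | a. a \<in> B} *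
        (card {(B \<inter> C) #>\<^bsub>G\<^esub> a | a. a \<in> B} * card {(B \<inter> C) #>\<^bsub>G\<^esub> a | a. a \<in> C})"
      using mult_le_mono[OF conjunct2[OF t1] conjunct2[OF t2]] by (simp add: ac_simps)
  qed (use s t1 t2 in auto)
qed

lemma plength_cons2: "plength G (x # y # r) = cweight G x y * plength G (y # r)"
  unfolding plength_def by (simp del: prod.lessThan_Suc add: prod.lessThan_Suc_shift)

lemma cpath_cons2: "cpath G (x # y # r) \<longleftrightarrow> commens G x y \<and> cpath G (y # r)"
  unfolding cpath_def commens_def
  apply (auto simp: nth_Cons split: nat.splits)
  done

lemma cweight_sub:
  assumes "group G" "subgroup A G" "A \<subseteq> B"
  shows "cweight G A B = rindex G A B"
proof -
  have "A \<inter> B = A" using assms(3) by blast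
  then show ?thesis unfolding cweight_def rindex_def using group.cos_self[OF assms(1,2)] by simp
qed

lemma path_bound:
  assumes "group G"
  shows "cpath G q \<Longrightarrow> commens G (hd q) (last q) \<and> cweight G (hd q) (last q) \<le> plength G q"
proof (induction q rule: induct_list012)
  case 1 then show ?case by (simp add: cpath_def)
next
  case (2 x)
  then have sx: "subgroup x G" by (simp add: cpath_def)
  have c: "{x #>\<^bsub>G\<^esub> a | a. a \<in> x} = {x}" using group.cos_self[OF assms sx] .
  show ?case using sx c by (simp add: commens_def fin_index_def cweight_def rindex_def plength_def)
next
  case (3 x y zs)
  have cxy: "commens G x y" and cp: "cpath G (y # zs)" using "3.prems" cpath_cons2 by auto
  have ih: "commens G y (last (y # zs)) \<and> cweight G y (last (y # zs)) \<le> plength G (y # zs)"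
    using "3.IH"(2)[OF cp] by simp
  have t: "commens G x (last (y # zs)) \<and> cweight G x (last (y # zs)) \<le> cweight G x y * cweight G y (last (y # zs))"
    using triangle[OF assms cxy] ih by blast
  have "cweight G x y * cweight G y (last (y # zs)) \<le> cweight G x y * plength G (y # zs)"
    using ih by (simp only: mult_le_mono2)
  then have le: "cweight G x (last (y # zs)) \<le> plength G (x # y # zs)"
    using t unfolding plength_cons2 by linarith
  have L: "last (x # y # zs) = last (y # zs)" by simp
  show ?case unfolding L list.sel(1) using t le by blast
qed

lemma chain_len:
  assumes "group G"
  shows "cpath G q \<Longrightarrow> (\<forall>i. Suc i < length q \<longrightarrow> q ! i \<subseteq> q ! Suc i) \<Longrightarrow>
    hd q \<subseteq> last q \<and> plength G q = cweight G (hd q) (last q)"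
proof (induction q rule: induct_list012)
  case 1 then show ?case by (simp add: cpath_def)
next
  case (2 x)
  then have sx: "subgroup x G" by (simp add: cpath_def)
  have c: "{x #>\<^bsub>G\<^esub> a | a. a \<in> x} = {x}" using group.cos_self[OF assms sx] .
  show ?case using sx c by (simp add: cweight_def rindex_def plength_def)
next
  case (3 x y zs)
  interpret group G by fact
  have cxy: "commens G x y" and cp: "cpath G (y # zs)" using "3.prems"(1) cpath_cons2 by auto
  have ch: "\<forall>i. Suc i < length (y # zs) \<longrightarrow> (y # zs) ! i \<subseteq> (y # zs) ! Suc i"
    using "3.prems"(2) by (metis Suc_less_eq length_Cons nth_Cons_Suc)
  have xy: "x \<subseteq> y" using "3.prems"(2) by (metis length_Cons nth_Cons_0 nth_Cons_Suc zero_less_Suc Suc_less_eq less_Suc_eq_0_disj)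
  let ?l = "last (y # zs)"
  have ih: "y \<subseteq> ?l \<and> plength G (y # zs) = cweight G y ?l" using "3.IH"(2)[OF cp ch] by simp
  have cyl: "commens G y ?l" using path_bound[OF assms cp] by simp
  have sub: "subgroup x G" "subgroup y G" "subgroup ?l G" using cxy cyl unfolding commens_def by auto
  have i1: "y \<inter> ?l = y" using ih by blast
  have i2: "x \<inter> y = x" using xy by blast
  have f1: "finite {y #>\<^bsub>G\<^esub> a | a. a \<in> ?l}" using cyl i1 unfolding commens_def fin_index_def
    by simp
  have f2: "finite {x #>\<^bsub>G\<^esub> a | a. a \<in> y}" using cxy i2 unfolding commens_def fin_index_def
    by simp
  have tw: "rindex G x ?l = rindex G y ?l * rindex G x y"
    using cos_tower[OF sub(1,2,3) xy _ f1 f2] ih unfolding rindex_def by blast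
  have "plength G (x # y # zs) = cweight G x y * cweight G y ?l" using ih by (simp only: plength_cons2)
  also have "\<dots> = rindex G x y * rindex G y ?l" using cweight_sub[OF assms sub(1) xy] cweight_sub[OF assms sub(2)] ih by simp
  also have "\<dots> = cweight G x ?l"
  proof -
    have xl: "x \<subseteq> ?l" using xy ih by blast
    have "cweight G x ?l = rindex G x ?l" by (rule cweight_sub[OF assms sub(1) xl])
    then show ?thesis using tw by (simp only: mult.commute)
  qed
  finally have e: "plength G (x # y # zs) = cweight G x ?l" .
  have L: "last (x # y # zs) = last (y # zs)" by simp
  show ?case unfolding L list.sel(1) using e xy ih by blast
qed

theorem corollary8:
  fixes G :: "('a, 'b) monoid_scheme" and p :: "'a set list"
  assumes "group G"
    and "cpath G p"
    and "\<forall>i. Suc i < length p \<longrightarrow> p ! i \<subseteq> p ! Suc i"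
  shows "geodesic G p"
proof -
  have eq: "plength G p = cweight G (hd p) (last p)" using chain_len[OF assms(1,2,3)] by simp
  have "cdist G (hd p) (last p) = plength G p"
    unfolding cdist_def
  proof (rule Least_equality)
    show "\<exists>q. cpath G q \<and> hd q = hd p \<and> last q = last p \<and> plength G q = plength G p" using assms(2) by blast
  next
    fix l assume "\<exists>q. cpath G q \<and> hd q = hd p \<and> last q = last p \<and> plength G q = l"
    then obtain q where "cpath G q" "hd q = hd p" "last q = last p" "plength G q = l" by blast
    then show "plength G p \<le> l" using path_bound[OF assms(1), of q] eq by simp
  qed
  then show ?thesis unfolding geodesic_def using assms(2) by simp
qed

end
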